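(* Let $(\tilde S,\tilde g)$ and $(\tilde T,\tilde f)$ be lifted partial permutations with $\tilde T=\tilde g(\tilde S)$. If $\mathrm{cr}(\tilde f\circ\tilde g)=\mathrm{cr}(\tilde f)+\mathrm{cr}(\tilde g)$, then $w_1(\tilde f\circ\tilde g)=w_1(\tilde f)+w_1(\tilde g)$ and $w_m(\tilde f\circ\tilde g)=w_m(\tilde f)+w_m(\tilde g)$.
   Context: Fix integers $0<k<m$. For $t\in\frac12\mathbb Z$ let $r_t(x)=2t-x$, and let $G_m$ be the group of isometries of $\mathbb R$ generated by $r_{1/2}$ and $r_{m-1/2}$; it acts on $\mathbb Z$ with $\mathbb Z/G_m\cong\{1,\dots,m-1\}$. A lifted partial permutation on $k$ letters is a pair $(\tilde S,\tilde f)$ with $\tilde S\subset\mathbb Z$ $G_m$-invariant, $|\tilde S/G_m|=k$, and $\tilde f:\tilde S\to\mathbb Z$ $G_m$-equivariant such that the induced map $\tilde S/G_m\to\mathbb Z/G_m$ is injective. Weight vector: $w_j(\tilde f)=\tfrac12\#\{i\in\tilde S: i<j-\tfrac12<\tilde f(i)\text{ or } i>j-\tfrac12>\tilde f(i)\}$ for $j=1,\dots,m$. A crossing of $\tilde f$ is a class $\langle i,j\rangle$ of pairs $i<j$ in $\tilde S$ with $\tilde f(i)>\tilde f(j)$, modulo $(i,j)\sim(i',j')$ iff $\{gi,gj\}=\{i',j'\}$ for some $g\in G_m$; $\mathrm{cr}(\tilde f)$ is the number of crossings. If $\tilde T=\tilde g(\tilde S)$ then $(\tilde S,\tilde f\circ\tilde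 g)$ is a lifted partial permutation. *)

theory Defs
  imports Complex_Main
begin

text \<open>Reflection r_t(x) = 2t - x on the integers, for t in (1/2)Z; we index by 2t.
  r_{1/2} = refl 1, r_{m-1/2} = refl (2m-1).\<close>
definition refl2 :: "int \<Rightarrow> int \<Rightarrow> int" where
  "refl2 s x = s - x"

text \<open>G_m: the group generated by r_{1/2} and r_{m-1/2} (both involutions, so
  closure of the identity under left composition with the generators).\<close>
inductive_set Gm :: "nat \<Rightarrow> (int \<Rightarrow> int) set" for m :: nat where
  Gm_id: "id \<in> Gm m"
| Gm_r1: "g \<in> Gm m \<Longrightarrow> refl2 1 \<circ> g \<in> Gm m"
| Gm_r2: "g \<in> Gm m \<Longrightarrow> refl2 (2 * int m - 1) \<circ> g \<in> Gm m"

definition orbit :: "nat \<Rightarrow> int \<Rightarrow> int set" where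
  "orbit m x = {g x | g. g \<in> Gm m}"

definition lpp :: "nat \<Rightarrow> nat \<Rightarrow> int set \<Rightarrow> (int \<Rightarrow> int) \<Rightarrow> bool" where
  "lpp m k S f \<longleftrightarrow>
     (\<forall>g\<in>Gm m. \<forall>x\<in>S. g x \<in> S) \<and>
     card (orbit m ` S) = k \<and> finite (orbit m ` S) \<and>
     (\<forall>g\<in>Gm m. \<forall>x\<in>S. f (g x) = g (f x)) \<and>
     (\<forall>x\<in>S. \<forall>y\<in>S. orbit m (f x) = orbit m (f y) \<longrightarrow> orbit m x = orbit m y)"

definition weight :: "int set \<Rightarrow> (int \<Rightarrow> int) \<Rightarrow> int \<Rightarrow> real" where
  "weight S f j = card {i \<in> S. (real_of_int i < real_of_int j - 1/2 \<and> real_of_int j - 1/2 < real_of_int (f i))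
                          \<or> (real_of_int i > real_of_int j - 1/2 \<and> real_of_int j - 1/2 > real_of_int (f i))} / 2"

definition crossing_pairs :: "int set \<Rightarrow> (int \<Rightarrow> int) \<Rightarrow> (int \<times> int) set" where
  "crossing_pairs S f = {(i, j). i \<in> S \<and> j \<in> S \<and> i < j \<and> f i > f j}"

definition pair_rel :: "nat \<Rightarrow> (int \<times> int) set \<Rightarrow> ((int \<times> int) \<times> (int \<times> int)) set" where
  "pair_rel m P = {((i, j), (i', j')). (i, j) \<in> P \<and> (i', j') \<in> P \<and>
                      (\<exists>g\<in>Gm m. {g i, g j} = {i', j'})}"

definition cr :: "nat \<Rightarrow> int set \<Rightarrow> (int \<Rightarrow> int) \<Rightarrow> nat" where
  "cr m S f = card (crossing_pairs S f // pair_rel m (crossing_pairs S f))"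

end

theory Submission
  imports Defs
begin

lemma Gm_explicit:
  assumes "h \<in> Gm m"
  shows "(\<exists>c. \<forall>x. h x = x + 2*c*(int m - 1)) \<or> (\<exists>c. \<forall>x. h x = 2*c*(int m - 1) + 1 - x)"
  using assms
proof induction
  case Gm_id
  show ?case by (rule disjI1, rule exI[of _ 0], simp)
next
  case (Gm_r1 g)
  from Gm_r1(2) show ?case
  proof
    assume "\<exists>c. \<forall>x. g x = x + 2*c*(int m - 1)"
    then obtain c where c: "\<forall>x. g x = x + 2*c*(int m - 1)" by blast
    have "\<forall>x. (refl2 1 \<circ> g) x = 2*(-c)*(int m - 1) + 1 - x" using c by (simp add: refl2_def algebra_simps)
    then show ?thesis by blast
  next
    assume "\<exists>c. \<forall>x. g x = 2*c*(int m - 1) + 1 - x"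
    then obtain c where c: "\<forall>x. g x = 2*c*(int m - 1) + 1 - x" by blast
    have "\<forall>x. (refl2 1 \<circ> g) x = x + 2*(-c)*(int m - 1)" using c by (simp add: refl2_def algebra_simps)
    then show ?thesis by blast
  qed
next
  case (Gm_r2 g)
  from Gm_r2(2) show ?case
  proof
    assume "\<exists>c. \<forall>x. g x = x + 2*c*(int m - 1)"
    then obtain c where c: "\<forall>x. g x = x + 2*c*(int m - 1)" by blast
    have "\<forall>x. (refl2 (2 * int m - 1) \<circ> g) x = 2*(1-c)*(int m - 1) + 1 - x" using c by (simp add: refl2_def algebra_simps)
    then show ?thesis by blast
  next
    assume "\<exists>c. \<forall>x. g x = 2*c*(int m - 1) + 1 - x"
    then obtain c where c: "\<forall>x. g x = 2*c*(int m - 1) + 1 - x" by blast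
    have "\<forall>x. (refl2 (2 * int m - 1) \<circ> g) x = x + 2*(1-c)*(int m - 1)" using c by (simp add: refl2_def algebra_simps)
    then show ?thesis by blast
  qed
qed

lemma Gm_iso:
  assumes "h \<in> Gm m"
  shows "(\<forall>x y. h x - h y = x - y) \<or> (\<forall>x y. h x - h y = y - x)"
  using Gm_explicit[OF assms] by auto

lemma Gm_free:
  assumes "h \<in> Gm m" "h z = z" shows "h x = x"
  using Gm_explicit[OF assms(1)]
proof
  assume "\<exists>c. \<forall>x. h x = x + 2*c*(int m - 1)"
  then obtain c where c: "\<forall>x. h x = x + 2*c*(int m - 1)" by blast
  have "2*c*(int m - 1) = 0" using spec[OF c, of z] assms(2) by simp
  with c show ?thesis by simp
next
  assume "\<exists>c. \<forall>x. h x = 2*c*(int m - 1) + 1 - x"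
  then obtain c where c: "\<forall>x. h x = 2*c*(int m - 1) + 1 - x" by blast
  define q where "q = c*(int m - 1)"
  have "2*c*(int m - 1) = 2*q" by (simp add: q_def)
  hence "2*z = 2*q + 1" using spec[OF c, of z] assms(2) by linarith
  then show ?thesis by presburger
qed

lemma Gm_comp: assumes "h1 \<in> Gm m" "h2 \<in> Gm m" shows "h1 \<circ> h2 \<in> Gm m"
  using assms(1)
proof induction
  case Gm_id then show ?case using assms(2) by simp
next
  case (Gm_r1 g)
  have "refl2 1 \<circ> g \<circ> h2 = refl2 1 \<circ> (g \<circ> h2)" by (simp add: comp_assoc)
  thus ?case using Gm.intros(2)[OF Gm_r1.IH] by (simp only:)
next
  case (Gm_r2 g)
  have "refl2 (2 * int m - 1) \<circ> g \<circ> h2 = refl2 (2 * int m - 1) \<circ> (g \<circ> h2)" by (simp add: comp_assoc)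
  thus ?case using Gm.intros(3)[OF Gm_r2.IH] by (simp only:)
qed

lemma Gm_inv: assumes "h \<in> Gm m" shows "\<exists>h'\<in>Gm m. \<forall>x. h' (h x) = x"
  using assms
proof induction
  case Gm_id show ?case by (rule bexI[of _ id]) (auto intro: Gm.intros(1))
next
  case (Gm_r1 g)
  then obtain h' where h': "h' \<in> Gm m" "\<forall>x. h' (g x) = x" by blast
  have "refl2 1 \<in> Gm m" using Gm.intros(2)[OF Gm.intros(1)] by simp
  hence "h' \<circ> refl2 1 \<in> Gm m" using Gm_comp[OF h'(1)] by blast
  moreover have "\<forall>x. (h' \<circ> refl2 1) ((refl2 1 \<circ> g) x) = x" using h' by (simp add: refl2_def)
  ultimately show ?case by blast
next
  case (Gm_r2 g)
  then obtain h' where h': "h' \<in> Gm m" "\<forall>x. h' (g x) = x" by blast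
  have "refl2 (2 * int m - 1) \<in> Gm m" using Gm.intros(3)[OF Gm.intros(1)] by simp
  hence "h' \<circ> refl2 (2 * int m - 1) \<in> Gm m" using Gm_comp[OF h'(1)] by blast
  moreover have "\<forall>x. (h' \<circ> refl2 (2 * int m - 1)) ((refl2 (2 * int m - 1) \<circ> g) x) = x" using h' by (simp add: refl2_def)
  ultimately show ?case by blast
qed

lemma self_orbit: "x \<in> orbit m x"
proof -
  have "id x = x" by simp
  thus ?thesis unfolding orbit_def mem_Collect_eq by (intro exI[of _ id]) (simp add: Gm.intros(1))
qed

lemma lpp_bound:
  assumes "lpp m k S g"
  shows "\<exists>B\<ge>0. \<forall>x\<in>S. \<bar>g x - x\<bar> \<le> B"
proof -
  let ?rep = "\<lambda>Ob. SOME y. y \<in> Ob"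
  have D: "(\<lambda>x. \<bar>g x - x\<bar>) ` S \<subseteq> (\<lambda>Ob. \<bar>g (?rep Ob) - ?rep Ob\<bar>) ` (orbit m ` S)"
  proof
    fix d assume "d \<in> (\<lambda>x. \<bar>g x - x\<bar>) ` S"
    then obtain x where x: "x \<in> S" "d = \<bar>g x - x\<bar>" by blast
    have "?rep (orbit m x) \<in> orbit m x" using self_orbit by (rule someI)
    then obtain h where h: "h \<in> Gm m" "?rep (orbit m x) = h x" unfolding orbit_def by blast
    have "g (h x) = h (g x)" using assms h x unfolding lpp_def by blast
    moreover have "\<bar>h (g x) - h x\<bar> = \<bar>g x - x\<bar>" using Gm_iso[OF h(1)] by (metis abs_minus_commute)
    ultimately have "d = \<bar>g (?rep (orbit m x)) - ?rep (orbit m x)\<bar>" using h x by simp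
    thus "d \<in> (\<lambda>Ob. \<bar>g (?rep Ob) - ?rep Ob\<bar>) ` (orbit m ` S)" using x by blast
  qed
  have fin: "finite ((\<lambda>x. \<bar>g x - x\<bar>) ` S)" using finite_subset[OF D] assms unfolding lpp_def by blast
  define B where "B = Max (insert 0 ((\<lambda>x. \<bar>g x - x\<bar>) ` S))"
  have "B \<ge> 0" using fin unfolding B_def by simp
  moreover have "\<forall>x\<in>S. \<bar>g x - x\<bar> \<le> B" using fin unfolding B_def by simp
  ultimately show ?thesis by blast
qed

lemma lpp_inj:
  assumes "lpp m k S g" shows "inj_on g S"
proof (rule inj_onI)
  fix x y assume xy: "x \<in> S" "y \<in> S" "g x = g y"
  have "orbit m x = orbit m y" using assms xy unfolding lpp_def by metis
  with self_orbit[of y m] obtain h where h: "h \<in> Gm m" "y = h x" unfolding orbit_def by auto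
  have "h (g x) = g x" using assms h xy unfolding lpp_def by metis
  hence "h x = x" using Gm_free[OF h(1)] by blast
  thus "x = y" using h by simp
qed

definition eqp :: "nat \<Rightarrow> int \<times> int \<Rightarrow> int \<times> int \<Rightarrow> bool" where
  "eqp m p q \<longleftrightarrow> (\<exists>h\<in>Gm m. {h (fst p), h (snd p)} = {fst q, snd q})"

lemma pair_rel_iff: "(p, q) \<in> pair_rel m P \<longleftrightarrow> p \<in> P \<and> q \<in> P \<and> eqp m p q"
  by (cases p, cases q) (auto simp: pair_rel_def eqp_def)

lemma eqp_refl: "eqp m p p"
  unfolding eqp_def by (rule bexI[of _ id]) (auto intro: Gm.intros(1))

lemma eqp_sym: assumes "eqp m p q" shows "eqp m q p"
proof -
  obtain h where h: "h \<in> Gm m" "{h (fst p), h (snd p)} = {fst q, snd q}" using assms eqp_def by blast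
  obtain h' where h': "h' \<in> Gm m" "\<forall>x. h' (h x) = x" using Gm_inv[OF h(1)] by blast
  have "h' ` {fst q, snd q} = h' ` {h (fst p), h (snd p)}" using h(2) by simp
  hence "{h' (fst q), h' (snd q)} = {fst p, snd p}" using h'(2) by simp
  thus ?thesis unfolding eqp_def using h'(1) by blast
qed

lemma eqp_trans: assumes "eqp m p q" "eqp m q r" shows "eqp m p r"
proof -
  obtain h where h: "h \<in> Gm m" "{h (fst p), h (snd p)} = {fst q, snd q}" using assms(1) eqp_def by blast
  obtain h' where h': "h' \<in> Gm m" "{h' (fst q), h' (snd q)} = {fst r, snd r}" using assms(2) eqp_def by blast
  have "h' ` {h (fst p), h (snd p)} = h' ` {fst q, snd q}" using h(2) by simp
  hence "{(h' \<circ> h) (fst p), (h' \<circ> h) (snd p)} = {fst r, snd r}" using h'(2) by simp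
  thus ?thesis unfolding eqp_def using Gm_comp[OF h'(1) h(1)] by blast
qed

lemma class_eq:
  assumes "p \<in> P" "q \<in> P" "eqp m p q"
  shows "pair_rel m P `` {p} = pair_rel m P `` {q}"
proof (rule set_eqI)
  fix x
  show "x \<in> pair_rel m P `` {p} \<longleftrightarrow> x \<in> pair_rel m P `` {q}"
    unfolding Image_singleton_iff pair_rel_iff
    using assms eqp_sym[of m p q] eqp_trans[of m q p x] eqp_trans[of m p q x] by blast
qed

lemma quot_some:
  assumes "X \<in> P // pair_rel m P"
  shows "(SOME p. p \<in> X) \<in> P \<and> X = pair_rel m P `` {SOME p. p \<in> X}"
proof -
  obtain p where p: "p \<in> P" "X = pair_rel m P `` {p}" using assms by (auto elim: quotientE)
  have pX: "p \<in> X" using p eqp_refl by (auto simp: pair_rel_iff)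
  define s where "s = (SOME p. p \<in> X)"
  have "s \<in> X" unfolding s_def using pX by (rule someI)
  hence s: "s \<in> P" "eqp m p s" using p(2) by (auto simp: pair_rel_iff)
  have "X = pair_rel m P `` {s}" using class_eq[OF p(1) s(1) s(2)] p(2) by simp
  thus ?thesis using s(1) unfolding s_def by blast
qed

lemma cp_inv:
  assumes clS: "\<forall>h\<in>Gm m. \<forall>x\<in>S. h x \<in> S" and eqv: "\<forall>h\<in>Gm m. \<forall>x\<in>S. g (h x) = h (g x)"
    and ij: "(i, j) \<in> crossing_pairs S g" and h: "h \<in> Gm m"
  shows "(h i, h j) \<in> crossing_pairs S g \<or> (h j, h i) \<in> crossing_pairs S g"
proof -
  have iS: "i \<in> S" and jS: "j \<in> S" and lt: "i < j" and gt: "g j < g i"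
    using ij by (auto simp: crossing_pairs_def)
  have S2: "h i \<in> S" "h j \<in> S" using clS h iS jS by auto
  have e: "g (h i) = h (g i)" "g (h j) = h (g j)" using eqv h iS jS by auto
  from Gm_iso[OF h] show ?thesis
  proof
    assume iso: "\<forall>x y. h x - h y = x - y"
    have "h j - h i = j - i" "h (g i) - h (g j) = g i - g j" using iso by auto
    hence "(h i, h j) \<in> crossing_pairs S g" using S2 e lt gt by (auto simp: crossing_pairs_def)
    thus ?thesis by blast
  next
    assume iso: "\<forall>x y. h x - h y = y - x"
    have "h i - h j = j - i" "h (g j) - h (g i) = g i - g j" using iso by auto
    hence "(h j, h i) \<in> crossing_pairs S g" using S2 e lt gt by (auto simp: crossing_pairs_def)
    thus ?thesis by blast
  qed
qed

lemma cp_inv2: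
  assumes clS: "\<forall>h\<in>Gm m. \<forall>x\<in>S. h x \<in> S" and eqv: "\<forall>h\<in>Gm m. \<forall>x\<in>S. g (h x) = h (g x)"
    and p: "p \<in> crossing_pairs S g" and e: "eqp m p q" and lt: "fst q < snd q"
  shows "q \<in> crossing_pairs S g"
proof -
  obtain i j where ij: "p = (i, j)" by (cases p)
  obtain a b where ab: "q = (a, b)" by (cases q)
  obtain h where h: "h \<in> Gm m" "{h i, h j} = {a, b}" using e ij ab eqp_def by auto
  have "a < b" using lt ab by simp
  from cp_inv[OF clS eqv p[unfolded ij] h(1)] h(2) \<open>a < b\<close> show ?thesis
    unfolding ab doubleton_eq_iff by (auto simp: crossing_pairs_def)
qed

lemma lpp_fin_quot:
  assumes lg: "lpp m k S g"
  shows "finite (crossing_pairs S g // pair_rel m (crossing_pairs S g))"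
proof -
  let ?P = "crossing_pairs S g" let ?R = "pair_rel m ?P"
  have clS: "\<forall>h\<in>Gm m. \<forall>x\<in>S. h x \<in> S" using lg unfolding lpp_def by blast
  have eqv: "\<forall>h\<in>Gm m. \<forall>x\<in>S. g (h x) = h (g x)" using lg unfolding lpp_def by blast
  obtain B where B: "B \<ge> 0" "\<forall>x\<in>S. \<bar>g x - x\<bar> \<le> B" using lpp_bound[OF lg] by blast
  define Rp where "Rp = (\<lambda>Ob. SOME y. y \<in> Ob) ` (orbit m ` S)"
  have finRp: "finite Rp" using lg unfolding Rp_def lpp_def by blast
  have rep: "\<exists>y\<in>Rp. \<exists>h\<in>Gm m. h x = y" if "x \<in> S" for x
  proof -
    have "(SOME y. y \<in> orbit m x) \<in> orbit m x" using self_orbit by (rule someI)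
    then obtain h where h: "h \<in> Gm m" "(SOME y. y \<in> orbit m x) = h x" unfolding orbit_def by blast
    have "(SOME y. y \<in> orbit m x) \<in> Rp" unfolding Rp_def using that by blast
    thus ?thesis using h by metis
  qed
  define W where "W = (\<Union>y\<in>Rp. {y - 2*B .. y + 2*B})"
  have finW: "finite W" unfolding W_def using finRp by blast
  have sub: "?P // ?R \<subseteq> (\<lambda>q. ?R `` {q}) ` (W \<times> W)"
  proof
    fix X assume "X \<in> ?P // ?R"
    then obtain p where p: "p \<in> ?P" "X = ?R `` {p}" by (auto elim: quotientE)
    obtain i j where ij: "p = (i, j)" by (cases p)
    have iS: "i \<in> S" using p ij by (auto simp: crossing_pairs_def)
    obtain y h where y: "y \<in> Rp" "h \<in> Gm m" "h i = y" using rep[OF iS] by blast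
    have "\<exists>q. q \<in> ?P \<and> eqp m p q \<and> (fst q = y \<or> snd q = y)"
    proof (cases "(h i, h j) \<in> ?P")
      case True
      moreover have "eqp m p (h i, h j)" unfolding eqp_def ij using y(2) by auto
      ultimately show ?thesis using y by auto
    next
      case False
      hence "(h j, h i) \<in> ?P" using cp_inv[OF clS eqv p(1)[unfolded ij] y(2)] by blast
      moreover have "eqp m p (h j, h i)" unfolding eqp_def ij using y(2) by (auto simp: insert_commute)
      ultimately show ?thesis using y by auto
    qed
    then obtain q where q: "q \<in> ?P" "eqp m p q" "fst q = y \<or> snd q = y" by blast
    obtain a b where ab: "q = (a, b)" by (cases q)
    have abS: "a \<in> S" "b \<in> S" "a < b" "g b < g a" using q(1) ab by (auto simp: crossing_pairs_def)
    have "\<bar>g a - a\<bar> \<le> B" "\<bar>g b - b\<bar> \<le> B" using B abS by auto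
    hence dab: "b - a \<le> 2*B" using abS by linarith
    have "a \<in> {y - 2*B .. y + 2*B} \<and> b \<in> {y - 2*B .. y + 2*B}" using q(3) ab dab abS(3) B(1) by auto
    hence "q \<in> W \<times> W" using y(1) ab unfolding W_def by blast
    moreover have "X = ?R `` {q}" using class_eq[OF p(1) q(1) q(2)] p(2) by simp
    ultimately show "X \<in> (\<lambda>q. ?R `` {q}) ` (W \<times> W)" by blast
  qed
  show ?thesis using finite_subset[OF sub] finW by blast
qed

lemma lt_half1: "(real_of_int a < real_of_int w - 1/2) \<longleftrightarrow> a < w"
proof
  assume "real_of_int a < real_of_int w - 1/2"
  hence "real_of_int a < real_of_int w" by linarith
  thus "a < w" by simp
next
  assume "a < w"
  hence "a + 1 \<le> w" by simp
  hence "real_of_int a + 1 \<le> real_of_int w" by (metis of_int_1 of_int_add of_int_le_iff)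
  thus "real_of_int a < real_of_int w - 1/2" by linarith
qed

lemma lt_half2: "(real_of_int w - 1/2 < real_of_int b) \<longleftrightarrow> w \<le> b"
  using lt_half1[of b w] by linarith

lemma weight_alt: "weight S f w = card {i\<in>S. (w \<le> i) \<noteq> (w \<le> f i)} / 2"
proof -
  have "{i \<in> S. (real_of_int i < real_of_int w - 1/2 \<and> real_of_int w - 1/2 < real_of_int (f i))
                          \<or> (real_of_int i > real_of_int w - 1/2 \<and> real_of_int w - 1/2 > real_of_int (f i))}
        = {i\<in>S. (w \<le> i) \<noteq> (w \<le> f i)}"
    by (auto simp: lt_half1 lt_half2)
  thus ?thesis unfolding weight_def by simp
qed

lemma lpp_fin_cross:
  assumes "lpp m k S g" shows "finite {i\<in>S. (w \<le> i) \<noteq> (w \<le> g i)}"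
proof -
  obtain B where B: "B \<ge> 0" "\<forall>x\<in>S. \<bar>g x - x\<bar> \<le> B" using lpp_bound[OF assms] by blast
  have "{i\<in>S. (w \<le> i) \<noteq> (w \<le> g i)} \<subseteq> {w - B .. w + B}"
  proof
    fix i assume "i \<in> {i\<in>S. (w \<le> i) \<noteq> (w \<le> g i)}"
    hence i: "i \<in> S" "(w \<le> i) \<noteq> (w \<le> g i)" by auto
    have "\<bar>g i - i\<bar> \<le> B" using B i by auto
    thus "i \<in> {w - B .. w + B}" using i(2) by auto
  qed
  thus ?thesis using finite_subset by blast
qed

lemma cr_strict:
  assumes lg: "lpp m k S g" and lf: "lpp m k' T f" and T: "T = g ` S"
    and c0: "p0 \<in> crossing_pairs S g" "p0 \<notin> crossing_pairs S (f \<circ> g)"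
  shows "cr m S (f \<circ> g) < cr m T f + cr m S g"
proof -
  define P where "P = crossing_pairs S (f \<circ> g)"
  define Pg where "Pg = crossing_pairs S g"
  define Pf where "Pf = crossing_pairs T f"
  define R where "R = pair_rel m P"
  define Rg where "Rg = pair_rel m Pg"
  define Rf where "Rf = pair_rel m Pf"
  have clS: "\<forall>h\<in>Gm m. \<forall>x\<in>S. h x \<in> S" using lg unfolding lpp_def by blast
  have eqg: "\<forall>h\<in>Gm m. \<forall>x\<in>S. g (h x) = h (g x)" using lg unfolding lpp_def by blast
  have eqf: "\<forall>h\<in>Gm m. \<forall>x\<in>T. f (h x) = h (f x)" using lf unfolding lpp_def by blast
  have eqfg: "\<forall>h\<in>Gm m. \<forall>x\<in>S. (f\<circ>g) (h x) = h ((f\<circ>g) x)" using eqg eqf T by auto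
  have injg: "inj_on g S" by (rule lpp_inj[OF lg])
  define \<phi> where "\<phi> = (\<lambda>p::int\<times>int. if g (snd p) < g (fst p) then Inl p else Inr (g (fst p), g (snd p)))"
  define cl where "cl = map_sum (\<lambda>a. Rg `` {a}) (\<lambda>b. Rf `` {b})"
  define F where "F = (\<lambda>X. cl (\<phi> (SOME p. p \<in> X)))"
  have Pprop: "fst p \<in> S \<and> snd p \<in> S \<and> fst p < snd p \<and> f (g (snd p)) < f (g (fst p))" if "p \<in> P" for p
    using that unfolding P_def crossing_pairs_def by auto
  have inl: "p \<in> Pg" if "p \<in> P" "g (snd p) < g (fst p)" for p
    using Pprop[OF that(1)] that(2) unfolding Pg_def crossing_pairs_def by (cases p) auto
  have inr: "(g (fst p), g (snd p)) \<in> Pf" if "p \<in> P" "\<not> g (snd p) < g (fst p)" for p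
  proof -
    have "g (fst p) \<noteq> g (snd p)" using Pprop[OF that(1)] by auto
    thus ?thesis using Pprop[OF that(1)] that(2) unfolding Pf_def crossing_pairs_def T by auto
  qed
  have key: "eqp m p q" if pq: "p \<in> P" "q \<in> P" "cl (\<phi> p) = cl (\<phi> q)" for p q
  proof (cases "g (snd p) < g (fst p)")
    case True
    show ?thesis
    proof (cases "g (snd q) < g (fst q)")
      case True2: True
      have e1: "Rg `` {p} = Rg `` {q}" using pq(3) True True2 unfolding cl_def \<phi>_def by simp
      have "q \<in> Rg `` {q}" using inl[OF pq(2) True2] eqp_refl unfolding Rg_def by (auto simp: pair_rel_iff)
      hence "q \<in> Rg `` {p}" using e1 by simp
      hence "(p, q) \<in> Rg" by (simp only: Image_singleton_iff)
      thus ?thesis unfolding Rg_def by (simp add: pair_rel_iff)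
    next
      case False
      then show ?thesis using pq(3) True unfolding cl_def \<phi>_def by simp
    qed
  next
    case False
    show ?thesis
    proof (cases "g (snd q) < g (fst q)")
      case True
      then show ?thesis using pq(3) False unfolding cl_def \<phi>_def by simp
    next
      case False2: False
      have "Rf `` {(g (fst p), g (snd p))} = Rf `` {(g (fst q), g (snd q))}"
        using pq(3) False False2 unfolding cl_def \<phi>_def by simp
      moreover have "(g (fst q), g (snd q)) \<in> Rf `` {(g (fst q), g (snd q))}"
        using inr[OF pq(2) False2] eqp_refl unfolding Rf_def by (auto simp: pair_rel_iff)
      ultimately have "(g (fst q), g (snd q)) \<in> Rf `` {(g (fst p), g (snd p))}" by (simp only:)
      hence "((g (fst p), g (snd p)), (g (fst q), g (snd q))) \<in> Rf" by (simp only: Image_singleton_iff)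
      hence "eqp m (g (fst p), g (snd p)) (g (fst q), g (snd q))"
        unfolding Rf_def by (simp add: pair_rel_iff)
      then obtain h where h: "h \<in> Gm m" "{h (g (fst p)), h (g (snd p))} = {g (fst q), g (snd q)}"
        unfolding eqp_def by auto
      have hS: "h (fst p) \<in> S" "h (snd p) \<in> S" using clS h(1) Pprop[OF pq(1)] by auto
      have qS: "fst q \<in> S" "snd q \<in> S" using Pprop[OF pq(2)] by auto
      have "{g (h (fst p)), g (h (snd p))} = {g (fst q), g (snd q)}"
        using h eqg Pprop[OF pq(1)] by auto
      hence "{h (fst p), h (snd p)} = {fst q, snd q}"
        unfolding doubleton_eq_iff using injg hS qS by (auto dest: inj_onD)
      thus ?thesis unfolding eqp_def using h(1) by blast
    qed
  qed
  have injF: "inj_on F (P // R)"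
  proof (rule inj_onI)
    fix X Y assume XY: "X \<in> P // R" "Y \<in> P // R" "F X = F Y"
    have sX: "(SOME p. p \<in> X) \<in> P" "X = R `` {SOME p. p \<in> X}" using quot_some[OF XY(1)[unfolded R_def]] R_def by auto
    have sY: "(SOME p. p \<in> Y) \<in> P" "Y = R `` {SOME p. p \<in> Y}" using quot_some[OF XY(2)[unfolded R_def]] R_def by auto
    have "eqp m (SOME p. p \<in> X) (SOME p. p \<in> Y)" using key[OF sX(1) sY(1)] XY(3) unfolding F_def by simp
    thus "X = Y" using class_eq[OF sX(1) sY(1)] sX(2) sY(2) unfolding R_def by simp
  qed
  have p0Pg: "p0 \<in> Pg" using c0 Pg_def by simp
  have c0q: "Rg `` {p0} \<in> Pg // Rg" using p0Pg unfolding Rg_def by (rule quotientI)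
  have img: "F ` (P // R) \<subseteq> (Pg // Rg - {Rg `` {p0}}) <+> (Pf // Rf)"
  proof
    fix Z assume "Z \<in> F ` (P // R)"
    then obtain X where X: "X \<in> P // R" "Z = F X" by blast
    define s where "s = (SOME p. p \<in> X)"
    have s: "s \<in> P" using quot_some[OF X(1)[unfolded R_def]] unfolding s_def by auto
    show "Z \<in> (Pg // Rg - {Rg `` {p0}}) <+> (Pf // Rf)"
    proof (cases "g (snd s) < g (fst s)")
      case True
      hence Z: "Z = Inl (Rg `` {s})" using X(2) unfolding F_def s_def[symmetric] cl_def \<phi>_def by simp
      have sPg: "s \<in> Pg" using inl[OF s True] .
      have "Rg `` {s} \<noteq> Rg `` {p0}"
      proof
        assume eq: "Rg `` {s} = Rg `` {p0}"
        have "p0 \<in> Rg `` {p0}" using p0Pg eqp_refl unfolding Rg_def by (auto simp: pair_rel_iff)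
        hence "p0 \<in> Rg `` {s}" using eq by (simp only:)
        hence "(s, p0) \<in> Rg" by (simp only: Image_singleton_iff)
        hence "eqp m s p0" unfolding Rg_def by (simp add: pair_rel_iff)
        moreover have "fst p0 < snd p0" using p0Pg unfolding Pg_def crossing_pairs_def by auto
        ultimately have "p0 \<in> crossing_pairs S (f \<circ> g)"
          using cp_inv2[OF clS eqfg s[unfolded P_def]] by blast
        thus False using c0 by simp
      qed
      moreover have "Rg `` {s} \<in> Pg // Rg" using sPg unfolding Rg_def by (rule quotientI)
      ultimately show ?thesis using Z by auto
    next
      case False
      hence Z: "Z = Inr (Rf `` {(g (fst s), g (snd s))})" using X(2) unfolding F_def s_def[symmetric] cl_def \<phi>_def by simp
      have "Rf `` {(g (fst s), g (snd s))} \<in> Pf // Rf" using inr[OF s False] unfolding Rf_def by (rule quotientI)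
      thus ?thesis using Z by auto
    qed
  qed
  have finG: "finite (Pg // Rg)" using lpp_fin_quot[OF lg] unfolding Pg_def Rg_def .
  have finF: "finite (Pf // Rf)" using lpp_fin_quot[OF lf] unfolding Pf_def Rf_def .
  have finD: "finite (Pg // Rg - {Rg `` {p0}})" using finG by (rule finite_Diff)
  have c1: "card (P // R) = card (F ` (P // R))" using card_image[OF injF] by simp
  have c2: "card (F ` (P // R)) \<le> card ((Pg // Rg - {Rg `` {p0}}) <+> (Pf // Rf))"
    using img finite_Plus[OF finD finF] by (rule card_mono[rotated])
  have c3: "card ((Pg // Rg - {Rg `` {p0}}) <+> (Pf // Rf)) = card (Pg // Rg - {Rg `` {p0}}) + card (Pf // Rf)"
    using finD finF by (rule card_Plus)
  have c4: "card (Pg // Rg - {Rg `` {p0}}) = card (Pg // Rg) - 1"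
    using c0q by (rule card_Diff_singleton)
  have c5: "card (Pg // Rg) > 0" using c0q finG by (auto simp: card_gt_0_iff)
  have "card (P // R) < card (Pg // Rg) + card (Pf // Rf)" using c1 c2 c3 c4 c5 by linarith
  moreover have "cr m S (f \<circ> g) = card (P // R)" unfolding cr_def P_def R_def ..
  moreover have "cr m S g = card (Pg // Rg)" unfolding cr_def Pg_def Rg_def ..
  moreover have "cr m T f = card (Pf // Rf)" unfolding cr_def Pf_def Rf_def ..
  ultimately show ?thesis by (simp only: add.commute)
qed

lemma weight_add:
  assumes lg: "lpp m k S g" and lf: "lpp m k' T f" and T: "T = g ` S"
    and RG: "(\<lambda>x. 2*w - 1 - x) \<in> Gm m"
    and cre: "cr m S (f \<circ> g) = cr m T f + cr m S g"
  shows "weight S (f \<circ> g) w = weight T f w + weight S g w"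
proof -
  define R where "R = (\<lambda>x::int. 2*w - 1 - x)"
  have RG': "R \<in> Gm m" using RG R_def by simp
  have clS: "\<forall>h\<in>Gm m. \<forall>x\<in>S. h x \<in> S" using lg unfolding lpp_def by blast
  have eqg: "\<forall>h\<in>Gm m. \<forall>x\<in>S. g (h x) = h (g x)" using lg unfolding lpp_def by blast
  have eqf: "\<forall>h\<in>Gm m. \<forall>x\<in>T. f (h x) = h (f x)" using lf unfolding lpp_def by blast
  have RS: "R x \<in> S" if "x \<in> S" for x using clS RG' that by blast
  have gR: "g (R x) = R (g x)" if "x \<in> S" for x using eqg RG' that by blast
  have fgR: "f (g (R x)) = R (f (g x))" if "x \<in> S" for x using eqf RG' that gR[OF that] T by auto
  have nodouble: "\<not> ((w \<le> i) \<noteq> (w \<le> g i) \<and> (w \<le> g i) \<noteq> (w \<le> f (g i)))" if iS: "i \<in> S" for i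
  proof
    assume dbl: "(w \<le> i) \<noteq> (w \<le> g i) \<and> (w \<le> g i) \<noteq> (w \<le> f (g i))"
    obtain i1 where i1: "i1 \<in> S" "i1 < w" "w \<le> g i1" "f (g i1) < w"
    proof (cases "w \<le> i")
      case True
      hence "g i < w" "w \<le> f (g i)" using dbl by auto
      moreover have "R i < w" using True R_def by simp
      ultimately show ?thesis using that[of "R i"] RS[OF iS] gR[OF iS] fgR[OF iS] R_def by auto
    next
      case False
      thus ?thesis using that[of i] iS dbl by auto
    qed
    define j1 where "j1 = R i1"
    have "j1 \<in> S" using RS i1(1) j1_def by simp
    moreover have "i1 < j1" "g j1 < g i1" "f (g i1) < f (g j1)"
      using i1 gR[OF i1(1)] fgR[OF i1(1)] unfolding j1_def R_def by auto
    ultimately have "(i1, j1) \<in> crossing_pairs S g" "(i1, j1) \<notin> crossing_pairs S (f \<circ> g)"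
      using i1(1) unfolding crossing_pairs_def by auto
    from cr_strict[OF lg lf T this] cre show False by simp
  qed
  define Xfg where "Xfg = {i\<in>S. (w \<le> i) \<noteq> (w \<le> (f \<circ> g) i)}"
  define Xg where "Xg = {i\<in>S. (w \<le> i) \<noteq> (w \<le> g i)}"
  define Xf where "Xf = {t\<in>T. (w \<le> t) \<noteq> (w \<le> f t)}"
  define Y where "Y = {i\<in>S. (w \<le> g i) \<noteq> (w \<le> f (g i))}"
  have un: "Xfg = Xg \<union> Y" using nodouble unfolding Xfg_def Xg_def Y_def by auto
  have dis: "Xg \<inter> Y = {}" using nodouble unfolding Xg_def Y_def by auto
  have finXg: "finite Xg" using lpp_fin_cross[OF lg] unfolding Xg_def .
  have finXf: "finite Xf" using lpp_fin_cross[OF lf] unfolding Xf_def .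
  have injY: "inj_on g Y" using lpp_inj[OF lg] unfolding Y_def by (rule inj_on_subset) auto
  have imgY: "g ` Y = Xf" unfolding Y_def Xf_def T by auto
  have finY: "finite Y" using finite_imageD[of g Y] finXf imgY injY by simp
  have cY: "card Y = card Xf" using card_image[OF injY] imgY by simp
  have "card Xfg = card Xg + card Y" using un dis finXg finY by (simp add: card_Un_disjoint)
  hence c: "card Xfg = card Xg + card Xf" using cY by simp
  have w1: "weight S (f \<circ> g) w = card Xfg / 2" unfolding weight_alt Xfg_def ..
  have w2: "weight S g w = card Xg / 2" unfolding weight_alt Xg_def ..
  have w3: "weight T f w = card Xf / 2" unfolding weight_alt Xf_def ..
  show ?thesis unfolding w1 w2 w3 c by (simp add: add_divide_distrib)
qed

theorem mainTheorem2:
  fixes k m :: nat and S T :: "int set" and f g :: "int \<Rightarrow> int"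
  assumes "0 < k" and "k < m"
    and "lpp m k S g" and "lpp m k T f"
    and "T = g ` S"
    and "cr m S (f \<circ> g) = cr m T f + cr m S g"
  shows "weight S (f \<circ> g) 1 = weight T f 1 + weight S g 1
       \<and> weight S (f \<circ> g) (int m) = weight T f (int m) + weight S g (int m)"
proof
  have "(\<lambda>x::int. 2*1 - 1 - x) = refl2 1 \<circ> id" by (auto simp: refl2_def)
  hence "(\<lambda>x::int. 2*1 - 1 - x) \<in> Gm m" using Gm.intros(1,2) by metis
  thus "weight S (f \<circ> g) 1 = weight T f 1 + weight S g 1"
    using weight_add[OF assms(3,4,5)] assms(6) by blast
next
  have "(\<lambda>x::int. 2*int m - 1 - x) = refl2 (2 * int m - 1) \<circ> id" by (auto simp: refl2_def)
  hence "(\<lambda>x::int. 2*int m - 1 - x) \<in> Gm m" using Gm.intros(1,3) by metis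
  thus "weight S (f \<circ> g) (int m) = weight T f (int m) + weight S g (int m)"
    using weight_add[OF assms(3,4,5)] assms(6) by blast
qed

end
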